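(* In each iteration of Algorithm 1 (with $i^*,i_L$ the quantities of that iteration), for every $i$ with $i^*<i<b(i^* )$ we have $\mathrm{avg}(i^*,i)\le\mathrm{avg}(i,b(i^* ))$, and for every $i$ with $i_L<i<i^*$ we have $\mathrm{avg}(i,b(i^* ))<\mathrm{avg}(i,i^* )$.
   Context: Problem (P): given an integer $n\ge1$, reals $0<q_1\le\cdots\le q_n$, $z_1,\dots,z_n>0$ and $K>0$, maximize $\sum_{i=1}^n x_i$ subject to $0\le x_i\le q_i$, $0\le x_1\le\cdots\le x_n$, $\sum_{i=1}^n z_ix_i\le K$. For $1\le i<j\le n+1$ let $\mathrm{sum}(i,j)=z_i+\cdots+z_{j-1}$ and $\mathrm{avg}(i,j)=\mathrm{sum}(i,j)/(j-i)$. Algorithm 1 (run on an instance of (P)): Initialize $S=\{0,n+1\}$, $y_i=\mathrm{avg}(i,n+1)$ and $x_i=0$ for $i=1,\dots,n$, and $\hat B=K$. While $\hat B>0$ and $S\ne\{0,1,\dots,n+1\}$, perform an iteration: let $i^*$ be the index $i\in\{1,\dots,n\}\setminus S$ minimizing $y_i$, ties broken in favour of the smallest index; let $i_L=\max\{j\in S:j<i^*\}$ and $i_R=\min\{j\in S:j>i^*\}$; set $d=\min\{\hat B/((i_R-i^* )y_{i^*}),\ q_{i^*}-x_{i^*}\}$; set $\hat B\leftarrow\hat B-d(i_R-i^* )y_{i^*}$; set $x_i\leftarrow x_i+d$ for all $i^*\le i<i_R$; set $y_i\leftarrow\mathrm{avg}(i,i^* )$ for all $i_L<i<i^*$; add $i^*$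 to $S$. Finally output $x_1,\dots,x_n$. Blocker: for $1\le i\le n$, $b(i)$ is the value of $i^*$ in the last iteration in which $y_i$ is updated (i.e. the last iteration with $i_L<i<i^*$); if $y_i$ is never updated, $b(i)=n+1$. *)

theory Defs
  imports Complex_Main
begin

text \<open>Indices 1..n; z, q are functions on nat (only values at 1..n matter).\<close>

definition sumz :: "(nat \<Rightarrow> real) \<Rightarrow> nat \<Rightarrow> nat \<Rightarrow> real" where
  "sumz z i j = (\<Sum>k\<in>{i..<j}. z k)"

definition avg :: "(nat \<Rightarrow> real) \<Rightarrow> nat \<Rightarrow> nat \<Rightarrow> real" where
  "avg z i j = sumz z i j / real (j - i)"

record alg_state =
  stS :: "nat set"
  sty :: "nat \<Rightarrow> real"
  stx :: "nat \<Rightarrow> real"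
  stB :: real

definition istar :: "nat \<Rightarrow> alg_state \<Rightarrow> nat" where
  "istar n st = (LEAST i. i \<in> {1..n} - stS st \<and>
                   (\<forall>j\<in>{1..n} - stS st. sty st i \<le> sty st j))"

definition iL :: "alg_state \<Rightarrow> nat \<Rightarrow> nat" where
  "iL st i = Max {j \<in> stS st. j < i}"

definition iR :: "alg_state \<Rightarrow> nat \<Rightarrow> nat" where
  "iR st i = Min {j \<in> stS st. i < j}"

definition alg_init :: "nat \<Rightarrow> (nat \<Rightarrow> real) \<Rightarrow> real \<Rightarrow> alg_state" where
  "alg_init n z K = \<lparr> stS = {0, n + 1}, sty = (\<lambda>i. avg z i (n + 1)),
                      stx = (\<lambda>i. 0), stB = K \<rparr>"

definition alg_step :: "nat \<Rightarrow> (nat \<Rightarrow> real) \<Rightarrow> (nat \<Rightarrow> real) \<Rightarrow> alg_state \<Rightarrow> alg_state" where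
  "alg_step n q z st =
     (let i = istar n st; l = iL st i; r = iR st i; yi = sty st i;
          d = min (stB st / (real (r - i) * yi)) (q i - stx st i)
      in \<lparr> stS = insert i (stS st),
           sty = (\<lambda>k. if l < k \<and> k < i then avg z k i else sty st k),
           stx = (\<lambda>k. if i \<le> k \<and> k < r then stx st k + d else stx st k),
           stB = stB st - d * real (r - i) * yi \<rparr>)"

definition alg_run :: "nat \<Rightarrow> (nat \<Rightarrow> real) \<Rightarrow> (nat \<Rightarrow> real) \<Rightarrow> real \<Rightarrow> nat \<Rightarrow> alg_state" where
  "alg_run n q z K k = (alg_step n q z ^^ k) (alg_init n z K)"

definition alg_cond :: "nat \<Rightarrow> alg_state \<Rightarrow> bool" where
  "alg_cond n st \<longleftrightarrow> stB st > 0 \<and> stS st \<noteq> {0..n + 1}"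

definition performed :: "nat \<Rightarrow> (nat \<Rightarrow> real) \<Rightarrow> (nat \<Rightarrow> real) \<Rightarrow> real \<Rightarrow> nat \<Rightarrow> bool" where
  "performed n q z K k \<longleftrightarrow> (\<forall>j\<le>k. alg_cond n (alg_run n q z K j))"

definition updates :: "nat \<Rightarrow> (nat \<Rightarrow> real) \<Rightarrow> (nat \<Rightarrow> real) \<Rightarrow> real \<Rightarrow> nat \<Rightarrow> nat \<Rightarrow> bool" where
  "updates n q z K k i \<longleftrightarrow> performed n q z K k \<and>
     (let st = alg_run n q z K k; s = istar n st in iL st s < i \<and> i < s)"

definition blocker :: "nat \<Rightarrow> (nat \<Rightarrow> real) \<Rightarrow> (nat \<Rightarrow> real) \<Rightarrow> real \<Rightarrow> nat \<Rightarrow> nat" where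
  "blocker n q z K i =
     (if \<exists>k. updates n q z K k i
      then istar n (alg_run n q z K (GREATEST k. updates n q z K k i))
      else n + 1)"

end

theory Submission
  imports Defs
begin

lemma istar_props:
  fixes st :: alg_state
  assumes "stS st \<subseteq> {0..n+1}" "stS st \<noteq> {0..n+1}" "0 \<in> stS st" "n+1 \<in> stS st"
  shows "istar n st \<in> {1..n} - stS st"
    and "\<forall>j\<in>{1..n} - stS st. sty st (istar n st) \<le> sty st j"
    and "\<forall>j\<in>{1..n} - stS st. j < istar n st \<longrightarrow> sty st (istar n st) < sty st j"
proof -
  let ?A = "{1..n} - stS st"
  let ?P = "\<lambda>i. i \<in> ?A \<and> (\<forall>j\<in>?A. sty st i \<le> sty st j)"
  have ne: "?A \<noteq> {}"
  proof
    assume "?A = {}"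
    then have "{1..n} \<subseteq> stS st" by blast
    have "{0..n+1} \<subseteq> stS st"
    proof
      fix x assume x: "x \<in> {0..n+1}"
      show "x \<in> stS st"
      proof (cases "x = 0 \<or> x = n+1")
        case True then show ?thesis using assms by auto
      next
        case False then have "x \<in> {1..n}" using x by auto
        then show ?thesis using \<open>{1..n} \<subseteq> stS st\<close> by blast
      qed
    qed
    with assms have "stS st = {0..n+1}" by blast
    with assms show False by blast
  qed
  have fin: "finite ?A" by simp
  obtain m where m: "m \<in> ?A" "sty st m = Min (sty st ` ?A)"
    using Min_in[of "sty st ` ?A"] fin ne by (metis (no_types, lifting) finite_imageI image_iff image_is_empty)
  have "?P m" using m fin by auto
  then have P: "?P (istar n st)" unfolding istar_def by (rule LeastI)
  then show "istar n st \<in> ?A" "\<forall>j\<in>?A. sty st (istar n st) \<le> sty st j" by auto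
  show "\<forall>j\<in>?A. j < istar n st \<longrightarrow> sty st (istar n st) < sty st j"
  proof (intro ballI impI)
    fix j assume j: "j \<in> ?A" "j < istar n st"
    have "\<not> ?P j" using not_less_Least[OF j(2)[unfolded istar_def]] .
    with j P show "sty st (istar n st) < sty st j" by force
  qed
qed

lemma iL_props:
  assumes "0 \<in> stS st" "0 < t"
  shows "iL st t \<in> stS st" "iL st t < t" "\<And>u. u \<in> stS st \<Longrightarrow> u < t \<Longrightarrow> u \<le> iL st t"
proof -
  have fin: "finite {j \<in> stS st. j < t}" by (rule finite_subset[of _ "{..<t}"]) auto
  have ne: "{j \<in> stS st. j < t} \<noteq> {}" using assms by auto
  show "iL st t \<in> stS st" "iL st t < t" using Max_in[OF fin ne] unfolding iL_def by auto
  show "\<And>u. u \<in> stS st \<Longrightarrow> u < t \<Longrightarrow> u \<le> iL st t" unfolding iL_def using fin by auto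
qed

lemma iR_props:
  assumes "stS st \<subseteq> {0..n+1}" "n+1 \<in> stS st" "i \<le> n"
  shows "iR st i \<in> stS st" "i < iR st i" "\<And>u. u \<in> stS st \<Longrightarrow> i < u \<Longrightarrow> iR st i \<le> u"
proof -
  have fin: "finite {j \<in> stS st. i < j}" by (rule finite_subset[of _ "{0..n+1}"]) (use assms in auto)
  have ne: "{j \<in> stS st. i < j} \<noteq> {}" using assms by auto
  show "iR st i \<in> stS st" "i < iR st i" using Min_in[OF fin ne] unfolding iR_def by auto
  show "\<And>u. u \<in> stS st \<Longrightarrow> i < u \<Longrightarrow> iR st i \<le> u" unfolding iR_def using fin by auto
qed

lemma iR_eqI:
  assumes "stS st \<subseteq> {0..n+1}" "n+1 \<in> stS st" "i \<le> n" "r \<in> stS st" "i < r"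
    "\<And>u. u \<in> stS st \<Longrightarrow> i < u \<Longrightarrow> r \<le> u"
  shows "iR st i = r"
  using iR_props[OF assms(1-3)] assms(4-6) by (meson le_antisym)

lemma run_Suc: "alg_run n q z K (Suc j) = alg_step n q z (alg_run n q z K j)"
  unfolding alg_run_def by simp

lemma S_step: "stS (alg_step n q z st) = insert (istar n st) (stS st)"
  unfolding alg_step_def Let_def by simp

lemma S_mono: "j \<le> j' \<Longrightarrow> stS (alg_run n q z K j) \<subseteq> stS (alg_run n q z K j')"
proof (induction j' rule: dec_induct)
  case (step m) then show ?case by (auto simp: run_Suc S_step)
qed simp

definition lastb :: "nat \<Rightarrow> (nat \<Rightarrow> real) \<Rightarrow> (nat \<Rightarrow> real) \<Rightarrow> real \<Rightarrow> nat \<Rightarrow> nat \<Rightarrow> nat" where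
  "lastb n q z K j i = (if \<exists>k'. k' < j \<and> updates n q z K k' i
      then istar n (alg_run n q z K (GREATEST k'. k' < j \<and> updates n q z K k' i)) else n + 1)"

definition Inv where
  "Inv n q z K j \<longleftrightarrow> (let st = alg_run n q z K j in
     0 \<in> stS st \<and> n+1 \<in> stS st \<and> stS st \<subseteq> {0..n+1} \<and>
     (\<forall>i\<in>{1..n} - stS st. iR st i = lastb n q z K j i \<and> sty st i = avg z i (iR st i)))"

lemma Inv_all: "(\<forall>j'<j. alg_cond n (alg_run n q z K j')) \<Longrightarrow> Inv n q z K j"
proof (induction j)
  case 0
  have "iR (alg_init n z K) i = n+1" if "i \<in> {1..n}" for i
    by (rule iR_eqI[of _ n]) (use that in \<open>auto simp: alg_init_def\<close>)
  then show ?case unfolding Inv_def Let_def lastb_def alg_run_def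
    by (auto simp: alg_init_def)
next
  case (Suc j)
  define st where "st = alg_run n q z K j"
  define t where "t = istar n st"
  have IH: "Inv n q z K j" using Suc by auto
  have cond: "alg_cond n st" using Suc.prems st_def by auto
  have perf: "performed n q z K j" using Suc.prems unfolding performed_def by auto
  have S0: "0 \<in> stS st" and Sn: "n+1 \<in> stS st" and Ssub: "stS st \<subseteq> {0..n+1}"
    and I: "\<forall>i\<in>{1..n} - stS st. iR st i = lastb n q z K j i \<and> sty st i = avg z i (iR st i)"
    using IH unfolding Inv_def Let_def st_def by auto
  have SS: "stS st \<noteq> {0..n+1}" using cond unfolding alg_cond_def by auto
  note ist = istar_props[OF Ssub SS S0 Sn, folded t_def]
  have t1: "t \<in> {1..n}" "t \<notin> stS st" using ist(1) by auto
  have tpos: "0 < t" using t1 by auto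
  note L = iL_props[OF S0 tpos]
  define st' where "st' = alg_step n q z st"
  have run': "alg_run n q z K (Suc j) = st'" by (simp add: run_Suc st_def st'_def)
  have S': "stS st' = insert t (stS st)" by (simp add: st'_def S_step t_def)
  have y': "sty st' = (\<lambda>k. if iL st t < k \<and> k < t then avg z k t else sty st k)"
    unfolding st'_def alg_step_def Let_def t_def by simp
  have upd_iff: "updates n q z K j i \<longleftrightarrow> iL st t < i \<and> i < t" for i
    using perf unfolding updates_def Let_def st_def t_def by auto
  have S'sub: "stS st' \<subseteq> {0..n+1}" using S' Ssub t1 by auto
  have S'n: "n+1 \<in> stS st'" using S' Sn by auto
  have "iR st' i = lastb n q z K (Suc j) i \<and> sty st' i = avg z i (iR st' i)"
    if i: "i \<in> {1..n} - stS st'" for i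
  proof -
    have iS: "i \<notin> stS st" "i \<noteq> t" "i \<le> n" using i S' by auto
    note R = iR_props[OF Ssub Sn iS(3)]
    show ?thesis
    proof (cases "iL st t < i \<and> i < t")
      case True
      have "(GREATEST k'. k' < Suc j \<and> updates n q z K k' i) = j"
        by (rule Greatest_equality) (use True upd_iff in auto)
      then have lb: "lastb n q z K (Suc j) i = t"
        unfolding lastb_def using True upd_iff by (auto simp: t_def st_def)
      have "iR st' i = t"
      proof (rule iR_eqI[OF S'sub S'n iS(3)])
        show "t \<in> stS st'" using S' by simp
        show "i < t" using True by simp
        fix u assume "u \<in> stS st'" "i < u"
        then show "t \<le> u" using S' L(3)[of u] True t1 by (cases "u < t") auto
      qed
      then show ?thesis using lb y' True by simp
    next
      case False
      have eq: "(\<lambda>k'. k' < Suc j \<and> updates n q z K k' i) = (\<lambda>k'. k' < j \<and> updates n q z K k' i)"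
        using False upd_iff by (auto simp: less_Suc_eq)
      have lb: "lastb n q z K (Suc j) i = lastb n q z K j i" unfolding lastb_def by (simp only: eq)
      have "iR st' i = iR st i"
      proof (rule iR_eqI[OF S'sub S'n iS(3)])
        show "iR st i \<in> stS st'" using S' R by simp
        show "i < iR st i" using R by simp
        fix u assume u: "u \<in> stS st'" "i < u"
        show "iR st i \<le> u"
        proof (cases "u = t")
          case True
          show ?thesis
          proof (rule ccontr)
            assume "\<not> iR st i \<le> u"
            then have lt: "t < iR st i" using True by simp
            have "iL st t < i"
            proof (rule ccontr)
              assume "\<not> iL st t < i"
              then have "i < iL st t" using iS(1) L(1) by (cases "i = iL st t") auto
              then have "iR st i \<le> iL st t" using R(3) L(1) t1 by auto
              then show False using lt L(2) t1 by auto
            qed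
            then show False using False u True by auto
          qed
        next
          case False
          then show ?thesis using u S' R(3) by auto
        qed
      qed
      moreover have "i \<in> {1..n} - stS st" using i S' by auto
      ultimately show ?thesis using lb y' False I by auto
    qed
  qed
  then show ?case unfolding Inv_def Let_def run' using S'sub S'n S' S0 by auto
qed


lemma sumz_split: "i \<le> j \<Longrightarrow> j \<le> k \<Longrightarrow> sumz z i k = sumz z i j + sumz z j k"
  unfolding sumz_def using sum.atLeastLessThan_concat[of i j k z] by simp

lemma avg1:
  assumes "i < j" "j < k" "avg z i k \<le> avg z j k"
  shows "avg z i j \<le> avg z j k"
proof -
  define A where "A = sumz z i j"
  define B where "B = sumz z j k"
  define a where "a = real (j - i)"
  define b where "b = real (k - j)"
  have ab: "a > 0" "b > 0" using assms by (auto simp: a_def b_def)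
  have e: "real (k - i) = a + b" using assms by (simp add: a_def b_def)
  have sp: "sumz z i k = A + B" using sumz_split[of i j k z] assms by (simp add: A_def B_def)
  have e1: "avg z i k = (A + B) / (a + b)" by (simp only: avg_def sp e)
  have e2: "avg z j k = B / b" by (simp only: avg_def B_def b_def)
  have h: "(A + B) / (a + b) \<le> B / b" using assms(3) e1 e2 by simp
  then have "(A + B) * b \<le> B * (a + b)" using ab by (simp add: divide_simps)
  then have "A * b \<le> B * a" by (simp add: algebra_simps)
  then have "A / a \<le> B / b" using ab by (simp add: divide_simps)
  then show ?thesis unfolding avg_def A_def B_def a_def b_def .
qed

lemma avg2:
  assumes "i < j" "j < k" "avg z j k < avg z i k"
  shows "avg z i k < avg z i j"
proof -
  define A where "A = sumz z i j"
  define B where "B = sumz z j k"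
  define a where "a = real (j - i)"
  define b where "b = real (k - j)"
  have ab: "a > 0" "b > 0" using assms by (auto simp: a_def b_def)
  have e: "real (k - i) = a + b" using assms by (simp add: a_def b_def)
  have sp: "sumz z i k = A + B" using sumz_split[of i j k z] assms by (simp add: A_def B_def)
  have e1: "avg z i k = (A + B) / (a + b)" by (simp only: avg_def sp e)
  have e2: "avg z j k = B / b" by (simp only: avg_def B_def b_def)
  have e3: "avg z i j = A / a" by (simp only: avg_def A_def a_def)
  have h: "B / b < (A + B) / (a + b)" using assms(3) e1 e2 by simp
  then have "B * (a + b) < (A + B) * b" using ab by (simp add: divide_simps)
  then have "B * a < A * b" by (simp add: algebra_simps)
  then have "(A + B) * a < A * (a + b)" by (simp add: algebra_simps)
  then have "(A + B) / (a + b) < A / a" using ab by (simp add: divide_simps)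
  then show ?thesis using e1 e3 by simp
qed

theorem lemma9:
  fixes n :: nat and q z :: "nat \<Rightarrow> real" and K :: real and k :: nat
  assumes "n \<ge> 1"
    and "\<forall>i\<in>{1..n}. 0 < q i"
    and "\<forall>i j. 1 \<le> i \<longrightarrow> i \<le> j \<longrightarrow> j \<le> n \<longrightarrow> q i \<le> q j"
    and "\<forall>i\<in>{1..n}. 0 < z i"
    and "K > 0"
    and "performed n q z K k"
  shows "(\<forall>i. istar n (alg_run n q z K k) < i
                \<and> i < blocker n q z K (istar n (alg_run n q z K k))
          \<longrightarrow> avg z (istar n (alg_run n q z K k)) i
              \<le> avg z i (blocker n q z K (istar n (alg_run n q z K k))))
       \<and> (\<forall>i. iL (alg_run n q z K k) (istar n (alg_run n q z K k)) < i
                \<and> i < istar n (alg_run n q z K k)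
          \<longrightarrow> avg z i (blocker n q z K (istar n (alg_run n q z K k)))
              < avg z i (istar n (alg_run n q z K k)))"
proof -
  define st where "st = alg_run n q z K k"
  define s where "s = istar n st"
  have perf: "\<forall>j\<le>k. alg_cond n (alg_run n q z K j)" using assms(6) unfolding performed_def .
  have Inv: "Inv n q z K k" by (rule Inv_all) (use perf in auto)
  have S0: "0 \<in> stS st" and Sn: "n+1 \<in> stS st" and Ssub: "stS st \<subseteq> {0..n+1}"
    and I: "\<forall>i\<in>{1..n} - stS st. iR st i = lastb n q z K k i \<and> sty st i = avg z i (iR st i)"
    using Inv unfolding Inv_def Let_def st_def by auto
  have SS: "stS st \<noteq> {0..n+1}" using perf unfolding alg_cond_def st_def by auto
  note ist = istar_props[OF Ssub SS S0 Sn, folded s_def]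
  have s1: "s \<in> {1..n}" "s \<notin> stS st" using ist(1) by auto
  have spos: "0 < s" using s1 by auto
  note L = iL_props[OF S0 spos]
  define R where "R = iR st s"
  note Rp = iR_props[OF Ssub Sn, of s, folded R_def]
  have Rp1: "R \<in> stS st" "s < R" "\<And>u. u \<in> stS st \<Longrightarrow> s < u \<Longrightarrow> R \<le> u" using Rp s1 by auto
  have upd_lt: "k' < k" if u: "updates n q z K k' s" for k'
  proof (rule ccontr)
    assume "\<not> k' < k"
    then consider "k' = k" | "Suc k \<le> k'" by linarith
    then show False
    proof cases
      case 1 then show False using u unfolding updates_def Let_def st_def s_def by auto
    next
      case 2
      define st2 where "st2 = alg_run n q z K k'"
      define t2 where "t2 = istar n st2"
      have "s \<in> stS (alg_run n q z K (Suc k))" by (simp add: run_Suc S_step st_def s_def)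
      then have sin: "s \<in> stS st2" using S_mono[OF 2, of n q z K] st2_def by auto
      have lt: "iL st2 t2 < s" "s < t2" using u unfolding updates_def Let_def st2_def t2_def by auto
      have fin: "finite {j \<in> stS st2. j < t2}" by (rule finite_subset[of _ "{..<t2}"]) auto
      have "s \<le> iL st2 t2" unfolding iL_def using fin sin lt(2) by (auto intro: Max_ge)
      then show False using lt by simp
    qed
  qed
  have eq: "(\<lambda>k'. updates n q z K k' s) = (\<lambda>k'. k' < k \<and> updates n q z K k' s)"
    using upd_lt by auto
  have "blocker n q z K s = lastb n q z K k s"
    unfolding blocker_def lastb_def by (simp only: eq)
  also have "\<dots> = R" using I s1 R_def by auto
  finally have bR: "blocker n q z K s = R" .
  have ys: "sty st s = avg z s R" using I s1 R_def by auto
  have part1: "avg z s i \<le> avg z i R" if i: "s < i" "i < R" for i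
  proof -
    have "R \<le> n+1" using Rp1 Ssub by auto
    then have iin: "i \<in> {1..n}" using i s1 by auto
    have inS: "i \<notin> stS st" using Rp1(3)[of i] i by auto
    have "iR st i = R"
      by (rule iR_eqI[OF Ssub Sn]) (use iin i Rp1 in auto)
    then have "sty st i = avg z i R" using I iin inS by auto
    moreover have "sty st s \<le> sty st i" using ist(2) iin inS by blast
    ultimately have "avg z s R \<le> avg z i R" using ys by simp
    then show ?thesis using avg1[OF i] by simp
  qed
  have part2: "avg z i R < avg z i s" if i: "iL st s < i" "i < s" for i
  proof -
    have iin: "i \<in> {1..n}" using i s1 by auto
    have inS: "i \<notin> stS st" using L(3)[of i] i by auto
    have "iR st i = R"
    proof (rule iR_eqI[OF Ssub Sn])
      show "i \<le> n" "R \<in> stS st" "i < R" using iin Rp1 i by auto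
      fix u assume u: "u \<in> stS st" "i < u"
      have "\<not> u < s" using L(3)[of u] u i by auto
      then have "s < u" using u s1 by (cases "u = s") auto
      then show "R \<le> u" using Rp1(3) u by auto
    qed
    then have "sty st i = avg z i R" using I iin inS by auto
    moreover have "sty st s < sty st i" using ist(3) iin inS i by blast
    ultimately have "avg z s R < avg z i R" using ys by simp
    then show ?thesis using avg2[OF i(2) Rp1(2)] by simp
  qed
  show ?thesis using part1 part2 bR unfolding st_def[symmetric] s_def[symmetric] by auto
qed

end
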